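(* Every linearly closed proper subset of the abstract linear space $LS^3$ is empty, a single point, or an abstract line of $LS^3$.
   Context: $\mathbb{S}^3$ is the unit sphere of $\mathbb{C}^2$. The abstract linear space $LS^3$ has point set $\mathbb{S}^3$ and abstract lines the sets $L\cap\mathbb{S}^3$ where $L$ is a complex affine line of $\mathbb{C}^2$ meeting $\mathbb{S}^3$ in more than one point (i.e. non-tangential; such $L\cap\mathbb{S}^3$ is a round circle); any two distinct points of $\mathbb{S}^3$ lie on exactly one abstract line. A subset $A\subset\mathbb{S}^3$ is linearly closed if for any two distinct $x,y\in A$ the abstract line through $x$ and $y$ is contained in $A$. Proper means $A\neq\mathbb{S}^3$. *)

theory Defs
  imports "HOL-Analysis.Analysis"
begin

definition S3 :: "(complex \<times> complex) set" where
  "S3 = {(z, w). (cmod z)\<^sup>2 + (cmod w)\<^sup>2 = 1}"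

definition cline :: "complex \<times> complex \<Rightarrow> complex \<times> complex \<Rightarrow> (complex \<times> complex) set" where
  "cline p v = {(fst p + t * fst v, snd p + t * snd v) | t. True}"

definition complex_affine_line :: "(complex \<times> complex) set \<Rightarrow> bool" where
  "complex_affine_line L \<longleftrightarrow> (\<exists>p v. v \<noteq> (0, 0) \<and> L = cline p v)"

definition abstract_line :: "(complex \<times> complex) set \<Rightarrow> bool" where
  "abstract_line A \<longleftrightarrow> (\<exists>L. complex_affine_line L \<and> A = L \<inter> S3 \<and>
      (\<exists>x y. x \<in> L \<inter> S3 \<and> y \<in> L \<inter> S3 \<and> x \<noteq> y))"

definition linearly_closed :: "(complex \<times> complex) set \<Rightarrow> bool" where
  "linearly_closed A \<longleftrightarrow> A \<subseteq> S3 \<and>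
     (\<forall>x\<in>A. \<forall>y\<in>A. x \<noteq> y \<longrightarrow>
        (\<forall>l. abstract_line l \<and> x \<in> l \<and> y \<in> l \<longrightarrow> l \<subseteq> A))"

end

theory Submission
  imports Defs
begin

lemma solve2r:
  fixes a b c d k1 k2 :: real
  assumes "b*c - a*d \<noteq> 0"
  shows "\<exists>p q. a*p - b*q = k1 \<and> c*p - d*q = k2"
proof -
  define D where "D = b*c - a*d"
  have D0: "D \<noteq> 0" using assms D_def by simp
  define p where "p = (- k1 * d + b * k2) / D"
  define q where "q = (a * k2 - c * k1) / D"
  have "a*p - b*q = (a*(- k1 * d + b * k2) - b*(a * k2 - c * k1)) / D"
    using D0 unfolding p_def q_def by (simp add: field_simps)
  also have "\<dots> = k1" using D0 unfolding D_def by (simp add: field_simps)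
  finally have 1: "a*p - b*q = k1" .
  have "c*p - d*q = (c*(- k1 * d + b * k2) - d*(a * k2 - c * k1)) / D"
    using D0 unfolding p_def q_def by (simp add: field_simps)
  also have "\<dots> = k2" using D0 unfolding D_def by (simp add: field_simps)
  finally show ?thesis using 1 by blast
qed
lemma solve2:
  fixes m1 m2 :: complex and k1 k2 :: real
  assumes "Im (m1 * cnj m2) \<noteq> 0"
  shows "\<exists>\<sigma>. Re (m1 * \<sigma>) = k1 \<and> Re (m2 * \<sigma>) = k2"
proof -
  have "Im m2 * Re m1 - Re m2 * Im m1 \<noteq> 0" using assms by (simp add: algebra_simps)
  then obtain p q where "Re m1 * p - Im m1 * q = k1" "Re m2 * p - Im m2 * q = k2"
    using solve2r[of "Im m1" "Re m2" "Re m1" "Im m2" k1 k2] by (auto simp: algebra_simps)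
  then show ?thesis by (intro exI[of _ "Complex p q"]) simp
qed

lemma pivot:
  fixes x1 x2 al1 al2 ga1 ga2 be1 be2 :: complex
  assumes x: "x1*cnj x1 + x2*cnj x2 = 1"
  and R: "al1*ga2 - al2*ga1 \<noteq> 0"
  and Q: "al1*be2 - al2*be1 \<noteq> 0"
  and P: "be1*ga2 - be2*ga1 \<noteq> 0"
  and D: "Im (cnj ((al1*cnj x1 + al2*cnj x2) * cnj (al1*be2 - al2*be1)) * ((ga1*cnj x1 + ga2*cnj x2) * cnj (ga1*be2 - ga2*be1))) \<noteq> 0"
  shows "\<exists>s t. s \<noteq> 0 \<and> t \<noteq> 0 \<and> (x1 + s*al1)*cnj (x1 + s*al1) + (x2 + s*al2)*cnj (x2 + s*al2) = 1
     \<and> (x1 + t*ga1)*cnj (x1 + t*ga1) + (x2 + t*ga2)*cnj (x2 + t*ga2) = 1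
     \<and> (be1 + s*al1)*(be2 + t*ga2) - (be2 + s*al2)*(be1 + t*ga1) = 0"
proof -
  define gA where "gA = al1*cnj x1 + al2*cnj x2"
  define gG where "gG = ga1*cnj x1 + ga2*cnj x2"
  define Pv where "Pv = be1*ga2 - be2*ga1"
  define Qv where "Qv = al1*be2 - al2*be1"
  define Rv where "Rv = al1*ga2 - al2*ga1"
  define nA where "nA = (cmod al1)^2 + (cmod al2)^2"
  define nG where "nG = (cmod ga1)^2 + (cmod ga2)^2"
  have nAc: "complex_of_real nA = al1*cnj al1 + al2*cnj al2"
    unfolding nA_def of_real_add complex_norm_square by (rule refl)
  have nGc: "complex_of_real nG = ga1*cnj ga1 + ga2*cnj ga2"
    unfolding nG_def of_real_add complex_norm_square by (rule refl)
  have Q0: "Qv \<noteq> 0" using Q Qv_def by simp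
  have cQ0: "cnj Qv \<noteq> 0" using Q0 by simp
  define m1 where "m1 = cnj gA"
  define m2 where "m2 = cnj gG * Pv / Qv"
  define zz where "zz = cnj ((al1*cnj x1 + al2*cnj x2) * cnj (al1*be2 - al2*be1)) * ((ga1*cnj x1 + ga2*cnj x2) * cnj (ga1*be2 - ga2*be1))"
  have zzD: "Im zz \<noteq> 0" using D unfolding zz_def by simp
  have mP: "ga1*be2 - ga2*be1 = - Pv" unfolding Pv_def by (simp add: algebra_simps)
  have zz2: "zz = cnj (gA * cnj Qv) * (gG * cnj (- Pv))"
    unfolding zz_def gA_def gG_def Qv_def mP by (rule refl)
  have "m1 * cnj m2 = - zz / of_real ((cmod Qv)^2)"
    unfolding m1_def m2_def zz2 complex_norm_square using Q0 cQ0
    by (simp add: field_simps)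
  then have "Im (m1 * cnj m2) = - Im zz / (cmod Qv)^2"
    by (simp add: Im_divide_of_real)
  then have Dm: "Im (m1 * cnj m2) \<noteq> 0" using zzD Q0 by simp
  obtain \<sigma> where s1: "Re (m1 * \<sigma>) = - nA/2"
     and s2: "Re (m2 * \<sigma>) = nG/2 - Re (cnj gG * Rv / Qv)"
    using solve2[OF Dm] by blast
  define \<tau> where "\<tau> = - (Rv + Pv*\<sigma>)/Qv"
  have "cnj gG * \<tau> = - (cnj gG * Rv / Qv) - m2 * \<sigma>"
    unfolding \<tau>_def m2_def using Q0 by (simp add: field_simps)
  then have t1: "Re (cnj gG * \<tau>) = - nG/2" using s2 by simp
  have nApos: "nA \<noteq> 0"
  proof
    assume "nA = 0"
    then have "al1 = 0 \<and> al2 = 0" unfolding nA_def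
      by (metis add_nonneg_eq_0_iff norm_eq_zero zero_le_power2 power_eq_0_iff)
    then show False using R by simp
  qed
  have nGpos: "nG \<noteq> 0"
  proof
    assume "nG = 0"
    then have "ga1 = 0 \<and> ga2 = 0" unfolding nG_def
      by (metis add_nonneg_eq_0_iff norm_eq_zero zero_le_power2 power_eq_0_iff)
    then show False using R by simp
  qed
  have sig0: "\<sigma> \<noteq> 0" using s1 nApos by auto
  have tau0: "\<tau> \<noteq> 0" using t1 nGpos by auto
  have e1: "cnj gA * \<sigma> + gA * cnj \<sigma> + (al1*cnj al1 + al2*cnj al2) = 0"
  proof -
    have "m1 * \<sigma> + cnj (m1 * \<sigma>) = complex_of_real (2 * Re (m1*\<sigma>))" by (rule complex_add_cnj)
    also have "\<dots> = complex_of_real (- nA)" using s1 by simp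
    finally have "m1 * \<sigma> + cnj (m1 * \<sigma>) = complex_of_real (- nA)" .
    then show ?thesis unfolding m1_def nAc[symmetric] by simp
  qed
  have e2: "cnj gG * \<tau> + gG * cnj \<tau> + (ga1*cnj ga1 + ga2*cnj ga2) = 0"
  proof -
    have "cnj gG * \<tau> + cnj (cnj gG * \<tau>) = complex_of_real (2 * Re (cnj gG * \<tau>))" by (rule complex_add_cnj)
    also have "\<dots> = complex_of_real (- nG)" using t1 by simp
    finally have "cnj gG * \<tau> + cnj (cnj gG * \<tau>) = complex_of_real (- nG)" .
    then show ?thesis unfolding nGc[symmetric] by simp
  qed
  define s where "s = 1/\<sigma>"
  define t where "t = 1/\<tau>"
  have ss: "s * \<sigma> = 1" "cnj s * cnj \<sigma> = 1" unfolding s_def using sig0 by auto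
  have tt: "t * \<tau> = 1" "cnj t * cnj \<tau> = 1" unfolding t_def using tau0 by auto
  have lin: "Pv * \<sigma> + Qv * \<tau> + Rv = 0" unfolding \<tau>_def using Q0 by (simp add: field_simps)
  have cgA: "cnj gA = cnj al1 * x1 + cnj al2 * x2" unfolding gA_def by simp
  have cgG: "cnj gG = cnj ga1 * x1 + cnj ga2 * x2" unfolding gG_def by simp
  have S1: "(x1 + s*al1)*cnj (x1 + s*al1) + (x2 + s*al2)*cnj (x2 + s*al2) = 1"
    using x ss e1 cgA gA_def unfolding complex_cnj_add complex_cnj_mult by algebra
  have S2: "(x1 + t*ga1)*cnj (x1 + t*ga1) + (x2 + t*ga2)*cnj (x2 + t*ga2) = 1"
    using x tt e2 cgG gG_def unfolding complex_cnj_add complex_cnj_mult by algebra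
  have S3: "(be1 + s*al1)*(be2 + t*ga2) - (be2 + s*al2)*(be1 + t*ga1) = 0"
    using ss(1) tt(1) lin Pv_def Qv_def Rv_def by algebra
  have "s \<noteq> 0" "t \<noteq> 0" using ss tt by auto
  then show ?thesis using S1 S2 S3 by blast
qed


lemma circ_quad:
  fixes q0 q2 r :: real and q1 m :: complex
  assumes r: "r > 0"
  and h: "\<And>u. u \<in> {1, -1, \<i>, -\<i>} \<Longrightarrow> q0 + Re (q1 * (m + of_real r * u)) + q2 * (cmod (m + of_real r * u))^2 = 0"
  shows "q0 + Re (q1 * s) + q2 * (cmod s)^2 = q2 * ((cmod (s - m))^2 - r^2)"
proof -
  have h1: "q0 + Re (q1 * (m + of_real r * 1)) + q2 * (cmod (m + of_real r * 1))^2 = 0" by (rule h) simp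
  have h2: "q0 + Re (q1 * (m + of_real r * (-1))) + q2 * (cmod (m + of_real r * (-1)))^2 = 0" by (rule h) simp
  have h3: "q0 + Re (q1 * (m + of_real r * \<i>)) + q2 * (cmod (m + of_real r * \<i>))^2 = 0" by (rule h) simp
  have h4: "q0 + Re (q1 * (m + of_real r * (-\<i>))) + q2 * (cmod (m + of_real r * (-\<i>)))^2 = 0" by (rule h) simp
  obtain a b where q1: "q1 = Complex a b" by (cases q1)
  obtain c d where m: "m = Complex c d" by (cases m)
  obtain x y where s: "s = Complex x y" by (cases s)
  have H1: "q0 + (a * (c+r) - b * d) + q2 * ((c+r)^2 + d^2) = 0" using h1 unfolding q1 m by (simp add: cmod_power2)
  have H2: "q0 + (a * (c-r) - b * d) + q2 * ((c-r)^2 + d^2) = 0" using h2 unfolding q1 m by (simp add: cmod_power2)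
  have H3: "q0 + (a * c - b * (d+r)) + q2 * (c^2 + (d+r)^2) = 0" using h3 unfolding q1 m by (simp add: cmod_power2)
  have H4: "q0 + (a * c - b * (d-r)) + q2 * (c^2 + (d-r)^2) = 0" using h4 unfolding q1 m by (simp add: cmod_power2)
  have "r * (2 * a + 4 * q2 * c) = 0" using H1 H2 by algebra
  then have A: "a = -2 * q2 * c" using r by simp
  have "r * (-2 * b + 4 * q2 * d) = 0" using H3 H4 by algebra
  then have B: "b = 2 * q2 * d" using r by (auto simp: algebra_simps)
  have C: "q0 = q2 * (c^2 + d^2 - r^2)" using H1 H2 A B by (simp add: algebra_simps power2_eq_square)
  show ?thesis unfolding q1 m s cmod_power2 using A B C by (simp add: algebra_simps power2_eq_square)
qed

lemma im_rep:
  fixes X0 X Y Z s :: complex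
  shows "Im (X0 + X * s + Y * cnj s + Z * (s * cnj s)) = Im X0 + Re ((-\<i> * (X - cnj Y)) * s) + Im Z * (cmod s)^2"
  unfolding cmod_power2 by (simp add: algebra_simps power2_eq_square)

lemma S3_iff: "(p1, p2) \<in> S3 \<longleftrightarrow> p1 * cnj p1 + p2 * cnj p2 = 1"
proof -
  have "(p1, p2) \<in> S3 \<longleftrightarrow> (cmod p1)^2 + (cmod p2)^2 = 1" unfolding S3_def by simp
  also have "\<dots> \<longleftrightarrow> complex_of_real ((cmod p1)^2 + (cmod p2)^2) = 1" by (simp only: of_real_eq_1_iff)
  also have "\<dots> \<longleftrightarrow> p1 * cnj p1 + p2 * cnj p2 = 1" unfolding of_real_add complex_norm_square ..
  finally show ?thesis .
qed

lemma det_par: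
  fixes u1 u2 v1 v2 :: complex
  assumes h: "u1 * v2 - u2 * v1 = 0" and nz: "(v1, v2) \<noteq> (0,0)"
  shows "\<exists>t. u1 = t * v1 \<and> u2 = t * v2"
proof (cases "v1 = 0")
  case True
  then have v2: "v2 \<noteq> 0" using nz by auto
  have "u1 * v2 = 0" using h True by simp
  then have "u1 = 0" using v2 by simp
  then have "u1 = (u2/v2) * v1 \<and> u2 = (u2/v2) * v2" using True v2 by simp
  then show ?thesis by blast
next
  case False
  have "u2 * v1 = u1 * v2" using h by simp
  then have "u2 = (u1/v1) * v2" using False by (simp add: divide_simps)
  moreover have "u1 = (u1/v1) * v1" using False by simp
  ultimately show ?thesis by blast
qed

lemma sph_eq:
  fixes p1 p2 x1 x2 :: complex
  assumes "p1 * cnj p1 + p2 * cnj p2 = 1" "x1 * cnj x1 + x2 * cnj x2 = 1"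
    "(p1 - x1) * cnj x1 + (p2 - x2) * cnj x2 = 0"
  shows "p1 = x1 \<and> p2 = x2"
proof -
  have "(p1 - x1) * cnj (p1 - x1) + (p2 - x2) * cnj (p2 - x2) = 0"
    using assms unfolding complex_cnj_diff complex_cnj_add complex_cnj_mult
  proof -
    assume a: "p1 * cnj p1 + p2 * cnj p2 = 1" "x1 * cnj x1 + x2 * cnj x2 = 1"
      "(p1 - x1) * cnj x1 + (p2 - x2) * cnj x2 = 0"
    have b: "cnj ((p1 - x1) * cnj x1 + (p2 - x2) * cnj x2) = 0" using a(3) by simp
    then have b': "(cnj p1 - cnj x1) * x1 + (cnj p2 - cnj x2) * x2 = 0" by simp
    show "(p1 - x1) * (cnj p1 - cnj x1) + (p2 - x2) * (cnj p2 - cnj x2) = 0"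
      using a b' by algebra
  qed
  then have "complex_of_real ((cmod (p1 - x1))^2 + (cmod (p2 - x2))^2) = 0"
    unfolding of_real_add complex_norm_square .
  then have "(cmod (p1 - x1))^2 + (cmod (p2 - x2))^2 = 0" by (simp only: of_real_eq_0_iff)
  then have "(cmod (p1 - x1))^2 = 0 \<and> (cmod (p2 - x2))^2 = 0"
    using add_nonneg_eq_0_iff[of "(cmod (p1 - x1))^2" "(cmod (p2 - x2))^2"] by simp
  then show ?thesis by simp
qed

lemma cline_mem: "(p1 + t * v1, p2 + t * v2) \<in> cline (p1, p2) (v1, v2)"
  unfolding cline_def by auto

lemma chain_line:
  assumes p: "(p1,p2) \<in> S3" and q: "(q1,q2) \<in> S3" and ne: "(p1,p2) \<noteq> (q1,q2)"
  shows "abstract_line (cline (p1,p2) (q1 - p1, q2 - p2) \<inter> S3)"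
proof -
  let ?L = "cline (p1,p2) (q1 - p1, q2 - p2)"
  have v: "(q1 - p1, q2 - p2) \<noteq> (0,0)" using ne by auto
  have pL: "(p1,p2) \<in> ?L" using cline_mem[of p1 0 "q1-p1" p2 "q2-p2"] by simp
  have qL: "(q1,q2) \<in> ?L" using cline_mem[of p1 1 "q1-p1" p2 "q2-p2"] by simp
  have cal: "complex_affine_line ?L" unfolding complex_affine_line_def using v by blast
  have "(p1,p2) \<in> ?L \<inter> S3" "(q1,q2) \<in> ?L \<inter> S3" using pL qL p q by auto
  then show ?thesis unfolding abstract_line_def using cal ne by blast
qed

lemma chain_sub:
  assumes lc: "linearly_closed A" and p: "(p1,p2) \<in> A" and q: "(q1,q2) \<in> A" and ne: "(p1,p2) \<noteq> (q1,q2)"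
  shows "cline (p1,p2) (q1 - p1, q2 - p2) \<inter> S3 \<subseteq> A"
proof -
  have AS: "A \<subseteq> S3" using lc unfolding linearly_closed_def by blast
  have cl: "\<And>l. abstract_line l \<Longrightarrow> (p1,p2) \<in> l \<Longrightarrow> (q1,q2) \<in> l \<Longrightarrow> l \<subseteq> A"
    using lc p q ne unfolding linearly_closed_def by blast
  let ?L = "cline (p1,p2) (q1 - p1, q2 - p2)"
  have pL: "(p1,p2) \<in> ?L" using cline_mem[of p1 0 "q1-p1" p2 "q2-p2"] by simp
  have qL: "(q1,q2) \<in> ?L" using cline_mem[of p1 1 "q1-p1" p2 "q2-p2"] by simp
  have al: "abstract_line (?L \<inter> S3)" using chain_line[of p1 p2 q1 q2] p q AS ne by blast
  show ?thesis by (rule cl[OF al]) (use pL qL p q AS in auto)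
qed



theorem proposition3p3:
  fixes A :: "(complex \<times> complex) set"
  assumes "linearly_closed A" and "A \<noteq> S3"
  shows "A = {} \<or> (\<exists>x. A = {x}) \<or> abstract_line A"
proof (rule ccontr)
  assume H: "\<not> (A = {} \<or> (\<exists>x. A = {x}) \<or> abstract_line A)"
  have lc: "linearly_closed A" by fact
  have AS: "A \<subseteq> S3" using lc unfolding linearly_closed_def by blast
  obtain a where aA0: "a \<in> A" using H by blast
  obtain b where bA0: "b \<in> A" and ab0: "b \<noteq> a" using H aA0 by blast
  obtain a1 a2 where aeq: "a = (a1, a2)" by (cases a)
  obtain b1 b2 where beq: "b = (b1, b2)" by (cases b)
  have aA: "(a1, a2) \<in> A" and bA: "(b1, b2) \<in> A" using aA0 bA0 aeq beq by auto
  have ab: "(a1, a2) \<noteq> (b1, b2)" using ab0 aeq beq by auto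
  define e1 where "e1 = b1 - a1"
  define e2 where "e2 = b2 - a2"
  have e0: "(e1, e2) \<noteq> (0, 0)" using ab unfolding e1_def e2_def by auto
  let ?L = "cline (a1, a2) (e1, e2)"
  have Lsub: "?L \<inter> S3 \<subseteq> A" using chain_sub[OF lc aA bA ab] unfolding e1_def e2_def .
  have Lline: "abstract_line (?L \<inter> S3)"
    using chain_line[of a1 a2 b1 b2] aA bA AS ab unfolding e1_def e2_def by blast
  have "\<not> A \<subseteq> ?L"
  proof
    assume "A \<subseteq> ?L"
    then have "A = ?L \<inter> S3" using Lsub AS by blast
    then show False using H Lline by simp
  qed
  then obtain x where xA0: "x \<in> A" and xL0: "x \<notin> ?L" by blast
  obtain x1 x2 where xeq: "x = (x1, x2)" by (cases x)
  have xA: "(x1, x2) \<in> A" and xL: "(x1, x2) \<notin> ?L" using xA0 xL0 xeq by auto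
  have aS: "a1 * cnj a1 + a2 * cnj a2 = 1" using aA AS S3_iff by blast
  have bS: "b1 * cnj b1 + b2 * cnj b2 = 1" using bA AS S3_iff by blast
  have xS: "x1 * cnj x1 + x2 * cnj x2 = 1" using xA AS S3_iff by blast
  have yL: "\<And>s. (a1 + s * e1, a2 + s * e2) \<in> ?L" by (rule cline_mem)
  have yx: "(a1 + s * e1, a2 + s * e2) \<noteq> (x1, x2)" for s
  proof
    assume "(a1 + s * e1, a2 + s * e2) = (x1, x2)"
    then show False using xL yL[of s] by simp
  qed
  have detx: "(a1 - x1) * e2 - (a2 - x2) * e1 \<noteq> 0"
  proof
    assume h: "(a1 - x1) * e2 - (a2 - x2) * e1 = 0"
    have "(x1 - a1) * e2 - (x2 - a2) * e1 = 0" using h by algebra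
    then obtain t where "x1 - a1 = t * e1" "x2 - a2 = t * e2" using det_par[OF _ e0] by blast
    then have "(x1, x2) = (a1 + t * e1, a2 + t * e2)" by (simp add: algebra_simps)
    then show False using xL yL[of t] by simp
  qed
  have xa: "(x1, x2) \<noteq> (a1, a2)" using yx[of 0] by auto
  have "S3 \<subseteq> A"
  proof
    fix w assume wS0: "w \<in> S3"
    show "w \<in> A"
    proof (rule ccontr)
      assume wA0: "w \<notin> A"
      obtain w1 w2 where weq: "w = (w1, w2)" by (cases w)
      have wS: "w1 * cnj w1 + w2 * cnj w2 = 1" using wS0 weq S3_iff by blast
      have wA: "(w1, w2) \<notin> A" using wA0 weq by simp
      have wS': "(w1, w2) \<in> S3" using wS0 weq by simp
      have help1: "(y1 - x1) * (x2 - w2) - (y2 - x2) * (x1 - w1) \<noteq> 0"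
        if yA: "(y1, y2) \<in> A" and yx: "(y1, y2) \<noteq> (x1, x2)" for y1 y2
      proof
        assume h: "(y1 - x1) * (x2 - w2) - (y2 - x2) * (x1 - w1) = 0"
        have "(w1 - x1) * (y2 - x2) - (w2 - x2) * (y1 - x1) = 0" using h by algebra
        moreover have "(y1 - x1, y2 - x2) \<noteq> (0, 0)" using yx by auto
        ultimately obtain t where "w1 - x1 = t * (y1 - x1)" "w2 - x2 = t * (y2 - x2)"
          using det_par by blast
        then have "(w1, w2) = (x1 + t * (y1 - x1), x2 + t * (y2 - x2))" by (simp add: algebra_simps)
        then have "(w1, w2) \<in> cline (x1, x2) (y1 - x1, y2 - x2) \<inter> S3" using cline_mem[of x1 t "y1 - x1" x2 "y2 - x2"] wS' by auto
        then show False using chain_sub[OF lc xA yA] yx wA by blast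
      qed
      define d0 where "d0 = (a1 - x1) * (x2 - w2) - (a2 - x2) * (x1 - w1)"
      have d00: "d0 \<noteq> 0" unfolding d0_def using help1[OF aA] xa by auto
      define c0 where "c0 = (a1 - x1) * cnj x1 + (a2 - x2) * cnj x2"
      have c00: "c0 \<noteq> 0"
      proof
        assume "c0 = 0"
        then have "a1 = x1 \<and> a2 = x2" using sph_eq[OF aS xS] unfolding c0_def by blast
        then show False using xa by simp
      qed
      define c1 where "c1 = e1 * cnj x1 + e2 * cnj x2"
      define d1 where "d1 = e1 * (x2 - w2) - e2 * (x1 - w1)"
      define Qf where "Qf = (\<lambda>s. Im (cnj (c0 * cnj d0) * ((c0 + s * c1) * cnj (d0 + s * d1))))"
      have degen: "Qf s = 0" if yS: "(a1 + s * e1, a2 + s * e2) \<in> S3" for s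
      proof (cases "s = 0")
        case True
        have im0: "Im (cnj z * z) = 0" for z :: complex by (simp add: algebra_simps)
        have "Qf s = Im (cnj (c0 * cnj d0) * (c0 * cnj d0))" unfolding Qf_def using True by simp
        then show ?thesis by (simp only: im0)
      next
        case False
        show ?thesis
        proof (rule ccontr)
          assume nd: "Qf s \<noteq> 0"
          have yA: "(a1 + s * e1, a2 + s * e2) \<in> A" using Lsub yL yS by blast
          define ga1 where "ga1 = a1 + s * e1 - x1"
          define ga2 where "ga2 = a2 + s * e2 - x2"
          have R: "(a1 - x1) * ga2 - (a2 - x2) * ga1 \<noteq> 0"
          proof -
            have "(a1 - x1) * ga2 - (a2 - x2) * ga1 = s * ((a1 - x1) * e2 - (a2 - x2) * e1)"
              unfolding ga1_def ga2_def by algebra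
            then show ?thesis using False detx by simp
          qed
          have Q: "(a1 - x1) * (x2 - w2) - (a2 - x2) * (x1 - w1) \<noteq> 0" using d00 d0_def by simp
          have P: "(x1 - w1) * ga2 - (x2 - w2) * ga1 \<noteq> 0"
          proof -
            have "(x1 - w1) * ga2 - (x2 - w2) * ga1 = - ((a1 + s * e1 - x1) * (x2 - w2) - (a2 + s * e2 - x2) * (x1 - w1))"
              unfolding ga1_def ga2_def by algebra
            then show ?thesis using help1[OF yA yx] by simp
          qed
          have g1: "ga1 * cnj x1 + ga2 * cnj x2 = c0 + s * c1"
            unfolding ga1_def ga2_def c0_def c1_def by algebra
          have g2: "ga1 * (x2 - w2) - ga2 * (x1 - w1) = d0 + s * d1"
            unfolding ga1_def ga2_def d0_def d1_def by algebra
          have D: "Im (cnj (((a1 - x1) * cnj x1 + (a2 - x2) * cnj x2) * cnj ((a1 - x1) * (x2 - w2) - (a2 - x2) * (x1 - w1))) * ((ga1 * cnj x1 + ga2 * cnj x2) * cnj (ga1 * (x2 - w2) - ga2 * (x1 - w1)))) \<noteq> 0"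
            using nd unfolding g1 g2 Qf_def c0_def[symmetric] d0_def[symmetric] .
          obtain s' t' where st: "s' \<noteq> 0" "t' \<noteq> 0"
            and qS: "(x1 + s' * (a1 - x1)) * cnj (x1 + s' * (a1 - x1)) + (x2 + s' * (a2 - x2)) * cnj (x2 + s' * (a2 - x2)) = 1"
            and rS: "(x1 + t' * ga1) * cnj (x1 + t' * ga1) + (x2 + t' * ga2) * cnj (x2 + t' * ga2) = 1"
            and dq: "((x1 - w1) + s' * (a1 - x1)) * ((x2 - w2) + t' * ga2) - ((x2 - w2) + s' * (a2 - x2)) * ((x1 - w1) + t' * ga1) = 0"
            using pivot[OF xS R Q P D] by blast
          define q1 where "q1 = x1 + s' * (a1 - x1)"
          define q2 where "q2 = x2 + s' * (a2 - x2)"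
          define r1 where "r1 = x1 + t' * ga1"
          define r2 where "r2 = x2 + t' * ga2"
          have qA: "(q1, q2) \<in> A"
          proof -
            have "(q1, q2) \<in> cline (x1, x2) (a1 - x1, a2 - x2) \<inter> S3"
              using cline_mem[of x1 s' "a1 - x1" x2 "a2 - x2"] qS S3_iff[of q1 q2] unfolding q1_def q2_def by auto
            then show ?thesis using chain_sub[OF lc xA aA xa] by blast
          qed
          have rA: "(r1, r2) \<in> A"
          proof -
            have "(r1, r2) \<in> cline (x1, x2) (a1 + s * e1 - x1, a2 + s * e2 - x2) \<inter> S3"
              using cline_mem[of x1 t' ga1 x2 ga2] rS S3_iff[of r1 r2] unfolding r1_def r2_def ga1_def ga2_def by auto
            then show ?thesis using chain_sub[OF lc xA yA not_sym[OF yx[of s]]] by blast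
          qed
          have qr: "(q1, q2) \<noteq> (r1, r2)"
          proof
            assume "(q1, q2) = (r1, r2)"
            then have h1: "s' * (a1 - x1) = t' * ga1" "s' * (a2 - x2) = t' * ga2"
              unfolding q1_def q2_def r1_def r2_def by auto
            have "s' * ((a1 - x1) * ga2 - (a2 - x2) * ga1) = 0" using h1 by algebra
            then show False using st R by simp
          qed
          have "(w1 - q1) * (r2 - q2) - (w2 - q2) * (r1 - q1) = 0"
            using dq unfolding q1_def q2_def r1_def r2_def by algebra
          moreover have "(r1 - q1, r2 - q2) \<noteq> (0, 0)" using qr by auto
          ultimately obtain t where "w1 - q1 = t * (r1 - q1)" "w2 - q2 = t * (r2 - q2)"
            using det_par by blast
          then have "(w1, w2) = (q1 + t * (r1 - q1), q2 + t * (r2 - q2))" by (simp add: algebra_simps)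
          then have "(w1, w2) \<in> cline (q1, q2) (r1 - q1, r2 - q2) \<inter> S3" using cline_mem[of q1 t "r1 - q1" q2 "r2 - q2"] wS' by auto
          then show False using chain_sub[OF lc qA rA qr] wA by blast
        qed
      qed
      define N where "N = (cmod e1)^2 + (cmod e2)^2"
      define g where "g = e1 * cnj a1 + e2 * cnj a2"
      have Nc: "complex_of_real N = e1 * cnj e1 + e2 * cnj e2"
        unfolding N_def of_real_add complex_norm_square ..
      have ysph: "(a1 + s * e1, a2 + s * e2) \<in> S3 \<longleftrightarrow> (cmod s)^2 * N + 2 * Re (s * g) = 0" for s
      proof -
        have E: "complex_of_real ((cmod s)^2 * N + 2 * Re (s * g)) = (s * cnj s) * (e1 * cnj e1 + e2 * cnj e2) + (s * g + cnj (s * g))"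
          by (simp only: of_real_add complex_add_cnj of_real_mult complex_norm_square Nc)
        have cg: "cnj g = cnj e1 * a1 + cnj e2 * a2" unfolding g_def by simp
        have id: "(a1 + s * e1) * cnj (a1 + s * e1) + (a2 + s * e2) * cnj (a2 + s * e2) = 1 + complex_of_real ((cmod s)^2 * N + 2 * Re (s * g))"
          unfolding E using aS cg g_def unfolding complex_cnj_add complex_cnj_mult by algebra
        show ?thesis unfolding S3_iff id by (simp only: add_cancel_left_right of_real_eq_0_iff)
      qed
      have N0: "N > 0"
      proof -
        have "N \<ge> 0" unfolding N_def by simp
        moreover have "N \<noteq> 0"
        proof
          assume "N = 0"
          then have "(cmod e1)^2 = 0 \<and> (cmod e2)^2 = 0"
            using add_nonneg_eq_0_iff[of "(cmod e1)^2" "(cmod e2)^2"] unfolding N_def by simp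
          then show False using e0 by simp
        qed
        ultimately show ?thesis by simp
      qed
      have "(a1 + 1 * e1, a2 + 1 * e2) \<in> S3" using bA AS unfolding e1_def e2_def by auto
      then have gRe: "N + 2 * Re g = 0" using ysph[of 1] by simp
      have g0: "g \<noteq> 0" using gRe N0 by auto
      define m where "m = - cnj g / complex_of_real N"
      define r where "r = cmod g / N"
      have r0: "r > 0" unfolding r_def using g0 N0 by simp
      have circ_id: "(cmod s)^2 * N + 2 * Re (s * g) = N * ((cmod (s - m))^2 - r^2)" for s
      proof -
        obtain gr gi where gg: "g = Complex gr gi" by (cases g)
        obtain sr si where ss: "s = Complex sr si" by (cases s)
        have mm: "m = Complex (- gr / N) (gi / N)" unfolding m_def gg
          by (simp add: complex_eq_iff Re_divide_of_real Im_divide_of_real)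
        have cg2: "cmod (Complex gr gi) * cmod (Complex gr gi) = gr * gr + gi * gi"
          using cmod_power2[of "Complex gr gi"] by (simp add: power2_eq_square)
        show ?thesis unfolding mm r_def gg ss cmod_power2 using N0
          by (simp add: power_divide cmod_power2 field_simps power2_eq_square cg2)
      qed
      have onc: "(a1 + (m + of_real r * u) * e1, a2 + (m + of_real r * u) * e2) \<in> S3" if u: "cmod u = 1" for u
      proof -
        have "cmod ((m + of_real r * u) - m) = r" using u r0 by (simp add: norm_mult)
        then show ?thesis unfolding ysph circ_id by simp
      qed
      define Om where "Om = cnj (c0 * cnj d0)"
      define q0 where "q0 = Im (Om * c0 * cnj d0)"
      define q1 where "q1 = - \<i> * (Om * c1 * cnj d0 - cnj (Om * c0 * cnj d1))"
      define q2 where "q2 = Im (Om * c1 * cnj d1)"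
      have Qrep: "Qf s = q0 + Re (q1 * s) + q2 * (cmod s)^2" for s
      proof -
        have "Om * ((c0 + s * c1) * cnj (d0 + s * d1)) = Om * c0 * cnj d0 + (Om * c1 * cnj d0) * s + (Om * c0 * cnj d1) * cnj s + (Om * c1 * cnj d1) * (s * cnj s)"
          by (simp add: algebra_simps)
        moreover have "Qf s = Im (Om * ((c0 + s * c1) * cnj (d0 + s * d1)))" unfolding Qf_def Om_def ..
        ultimately have "Qf s = Im (Om * c0 * cnj d0 + (Om * c1 * cnj d0) * s + (Om * c0 * cnj d1) * cnj s + (Om * c1 * cnj d1) * (s * cnj s))"
          by simp
        also have "\<dots> = q0 + Re (q1 * s) + q2 * (cmod s)^2" unfolding q0_def q1_def q2_def by (rule im_rep)
        finally show ?thesis .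
      qed
      have circ: "Qf s = q2 * ((cmod (s - m))^2 - r^2)" for s
      proof -
        have "q0 + Re (q1 * s) + q2 * (cmod s)^2 = q2 * ((cmod (s - m))^2 - r^2)"
        proof (rule circ_quad[OF r0])
          fix u :: complex assume "u \<in> {1, -1, \<i>, -\<i>}"
          then have "cmod u = 1" by auto
          then have "Qf (m + of_real r * u) = 0" using degen onc by blast
          then show "q0 + Re (q1 * (m + of_real r * u)) + q2 * (cmod (m + of_real r * u))^2 = 0"
            using Qrep by simp
        qed
        then show ?thesis using Qrep by simp
      qed
      have q20: "q2 = 0"
      proof (rule ccontr)
        assume q2n: "q2 \<noteq> 0"
        have c10: "c1 \<noteq> 0"
        proof
          assume "c1 = 0" then have "q2 = 0" unfolding q2_def by simp
          then show False using q2n by simp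
        qed
        define sc where "sc = - c0 / c1"
        have z: "c0 + sc * c1 = 0" unfolding sc_def using c10 by simp
        have "Qf sc = 0" unfolding Qf_def z by simp
        then have "(cmod (sc - m))^2 - r^2 = 0" using circ[of sc] q2n by simp
        then have yS: "(a1 + sc * e1, a2 + sc * e2) \<in> S3" unfolding ysph circ_id by simp
        then have yS': "(a1 + sc * e1) * cnj (a1 + sc * e1) + (a2 + sc * e2) * cnj (a2 + sc * e2) = 1"
          using S3_iff by blast
        have "(a1 + sc * e1 - x1) * cnj x1 + (a2 + sc * e2 - x2) * cnj x2 = c0 + sc * c1"
          unfolding c0_def c1_def by algebra
        then have "a1 + sc * e1 = x1 \<and> a2 + sc * e2 = x2" using sph_eq[OF yS' xS] z by simp
        then show False using yx[of sc] by simp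
      qed
      have lin0: "q0 + Re (q1 * s) = 0" for s using circ[of s] Qrep[of s] q20 by simp
      have "q0 = 0" using lin0[of 0] by simp
      then have "Re q1 = 0" "Im q1 = 0" using lin0[of 1] lin0[of \<i>] by simp_all
      then have q10: "q1 = 0" by (simp add: complex_eq_iff)
      then have XY: "Om * c1 * cnj d0 = cnj (Om * c0 * cnj d1)" unfolding q1_def by simp
      have "cnj c0 * cnj d0 * (d0 * c1 - c0 * d1) = Om * c1 * cnj d0 - cnj (Om * c0 * cnj d1)"
        unfolding Om_def by (simp add: algebra_simps)
      then have "cnj c0 * cnj d0 * (d0 * c1 - c0 * d1) = 0" using XY by simp
      then have rel: "d0 * c1 = c0 * d1" using c00 d00 by simp
      have "((x1 - w1) * cnj x1 + (x2 - w2) * cnj x2) * d0 * ((a1 - x1) * e2 - (a2 - x2) * e1) = 0"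
        using rel unfolding c0_def c1_def d0_def d1_def by algebra
      then have "(x1 - w1) * cnj x1 + (x2 - w2) * cnj x2 = 0" using d00 detx by simp
      then have "(w1 - x1) * cnj x1 + (w2 - x2) * cnj x2 = 0" by algebra
      then have "w1 = x1 \<and> w2 = x2" using sph_eq[OF wS xS] by simp
      then show False using wA xA by simp
    qed
  qed
  then show False using AS assms(2) by blast
qed

end
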